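(* Let $q$ be a prime power and let $\{P_i\}$ be an infinite family of toric codes over $\mathbb{F}_q$, with $P_i\subseteq[0,q-2]^{n_i}$. If $\{L(P_i)\}$ is unbounded, then $\delta(P_i)\to0$ as $i\to\infty$.
   Context: For an integral convex polytope $P\subseteq[0,q-2]^n$: $\mathcal{L}_P=\mathrm{span}_{\mathbb{F}_q}\{x^p: p\in P\cap\mathbb{Z}^n\}$, $N(P)=\max_{0\neq f\in\mathcal{L}_P}|Z(f)|$ with $Z(f)$ the zero set of $f$ in $(\mathbb{F}_q^\times)^n$, $\delta(P)=\big((q-1)^n-N(P)\big)/(q-1)^n$, and $R(P)=|P\cap\mathbb{Z}^n|/(q-1)^n$. A sequence of nonempty integral convex polytopes $P_i\subseteq[0,q-2]^{n_i}$ is an infinite family of toric codes if $n_i\to\infty$ and $\delta(P_i)\to\delta$, $R(P_i)\to R$ for some $\delta,R\in[0,1]$. The Minkowski length $\ell(P)$ of a lattice polytope is the largest number of summands in a decomposition $P=P_1+\dots+P_\ell$ (Minkowski sum) into lattice polytopes of positive dimension ($\ell=0$ for a point); the full Minkowski length is $L(P)=\max\{\ell(Q):Q\subseteq P\text{ a lattice polytope}\}$. *)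

theory Defs
  imports Complex_Main
begin

text \<open>Points of R^n are represented as functions nat => real that vanish at
  all coordinates j >= n; lattice points as functions nat => int likewise.\<close>

definition supp_in :: "nat \<Rightarrow> (nat \<Rightarrow> 'b::zero) \<Rightarrow> bool" where
  "supp_in n v \<longleftrightarrow> (\<forall>j\<ge>n. v j = 0)"

definition real_pt :: "(nat \<Rightarrow> int) \<Rightarrow> (nat \<Rightarrow> real)" where
  "real_pt v = (\<lambda>j. real_of_int (v j))"

definition conv_hull_pts :: "(nat \<Rightarrow> int) set \<Rightarrow> (nat \<Rightarrow> real) set" where
  "conv_hull_pts V = {x. \<exists>u. (\<forall>v\<in>V. u v \<ge> 0) \<and> sum u V = 1 \<and>
                          x = (\<lambda>j. \<Sum>v\<in>V. u v * real_of_int (v j))}"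

definition lattice_polytope :: "nat \<Rightarrow> (nat \<Rightarrow> real) set \<Rightarrow> bool" where
  "lattice_polytope n P \<longleftrightarrow> (\<exists>V. finite V \<and> V \<noteq> {} \<and> (\<forall>v\<in>V. supp_in n v) \<and>
                                  P = conv_hull_pts V)"

definition lattice_points :: "nat \<Rightarrow> (nat \<Rightarrow> real) set \<Rightarrow> (nat \<Rightarrow> int) set" where
  "lattice_points n P = {p. supp_in n p \<and> real_pt p \<in> P}"

definition pos_dim :: "(nat \<Rightarrow> real) set \<Rightarrow> bool" where
  "pos_dim P \<longleftrightarrow> (\<exists>x\<in>P. \<exists>y\<in>P. x \<noteq> y)"

fun msum :: "(nat \<Rightarrow> real) set list \<Rightarrow> (nat \<Rightarrow> real) set" where
  "msum [] = {\<lambda>_. 0}"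
| "msum (P # Ps) = {(\<lambda>j. x j + y j) | x y. x \<in> P \<and> y \<in> msum Ps}"

definition minkowski_length :: "nat \<Rightarrow> (nat \<Rightarrow> real) set \<Rightarrow> nat" where
  "minkowski_length n P = Sup {l. \<exists>Ps. length Ps = l \<and>
      (\<forall>Q\<in>set Ps. lattice_polytope n Q \<and> pos_dim Q) \<and> P = msum Ps}"

definition full_minkowski_length :: "nat \<Rightarrow> (nat \<Rightarrow> real) set \<Rightarrow> nat" where
  "full_minkowski_length n P =
     Sup {minkowski_length n Q | Q. lattice_polytope n Q \<and> Q \<subseteq> P}"

definition torus :: "nat \<Rightarrow> (nat \<Rightarrow> 'a::field) set" where
  "torus n = {x. (\<forall>j<n. x j \<noteq> 0) \<and> (\<forall>j\<ge>n. x j = 1)}"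

definition toric_eval :: "nat \<Rightarrow> (nat \<Rightarrow> real) set \<Rightarrow> ((nat \<Rightarrow> int) \<Rightarrow> 'a::field)
                          \<Rightarrow> (nat \<Rightarrow> 'a) \<Rightarrow> 'a" where
  "toric_eval n P c x = (\<Sum>p\<in>lattice_points n P. c p * (\<Prod>j<n. x j ^ nat (p j)))"

definition zero_count :: "nat \<Rightarrow> (nat \<Rightarrow> real) set \<Rightarrow> ((nat \<Rightarrow> int) \<Rightarrow> 'a::field) \<Rightarrow> nat" where
  "zero_count n P c = card {x \<in> torus n. toric_eval n P c x = 0}"

definition toric_N :: "'a::{field,finite} itself \<Rightarrow> nat \<Rightarrow> (nat \<Rightarrow> real) set \<Rightarrow> nat" where
  "toric_N _ n P = Sup {zero_count n P (c :: (nat \<Rightarrow> int) \<Rightarrow> 'a) | c.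
                          \<exists>p\<in>lattice_points n P. c p \<noteq> 0}"

definition toric_delta :: "'a::{field,finite} itself \<Rightarrow> nat \<Rightarrow> (nat \<Rightarrow> real) set \<Rightarrow> real" where
  "toric_delta (T :: 'a itself) n P =
     ((real (card (UNIV :: 'a set)) - 1) ^ n - real (toric_N T n P)) / (real (card (UNIV :: 'a set)) - 1) ^ n"

definition toric_rate :: "'a::{field,finite} itself \<Rightarrow> nat \<Rightarrow> (nat \<Rightarrow> real) set \<Rightarrow> real" where
  "toric_rate (T :: 'a itself) n P = real (card (lattice_points n P)) / (real (card (UNIV :: 'a set)) - 1) ^ n"

definition in_box :: "nat \<Rightarrow> nat \<Rightarrow> (nat \<Rightarrow> real) set \<Rightarrow> bool" where
  "in_box q n P \<longleftrightarrow> (\<forall>x\<in>P. \<forall>j<n. 0 \<le> x j \<and> x j \<le> real q - 2)"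

end

theory Submission
  imports Defs "HOL-Library.FuncSet"
begin


definition ptS :: "(nat \<Rightarrow> nat \<Rightarrow> int) \<Rightarrow> (nat \<Rightarrow> nat \<Rightarrow> int) \<Rightarrow> nat \<Rightarrow> nat set \<Rightarrow> nat \<Rightarrow> int" where
  "ptS a b m S = (\<lambda>j. \<Sum>k<m. (if k \<in> S then b k j else a k j))"

definition monoi :: "nat \<Rightarrow> (nat \<Rightarrow> int) \<Rightarrow> (nat \<Rightarrow> 'a::field) \<Rightarrow> 'a" where
  "monoi n p x = (\<Prod>j<n. power_int (x j) (p j))"

lemma power_int_sum:
  fixes x :: "'a::field"
  assumes "x \<noteq> 0" "finite K"
  shows "power_int x (\<Sum>k\<in>K. e k) = (\<Prod>k\<in>K. power_int x (e k))"
  using assms(2) by (induction K rule: finite_induct) (auto simp: power_int_add assms(1))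

lemma ptS_split:
  assumes "S \<subseteq> {..<m}"
  shows "ptS a b m S j = (\<Sum>k<m. a k j) + (\<Sum>k\<in>S. b k j - a k j)"
proof -
  have "ptS a b m S j = (\<Sum>k<m. a k j + (if k \<in> S then b k j - a k j else 0))"
    unfolding ptS_def by (rule sum.cong) auto
  also have "\<dots> = (\<Sum>k<m. a k j) + (\<Sum>k<m. (if k \<in> S then b k j - a k j else 0))"
    by (simp add: sum.distrib)
  also have "(\<Sum>k<m. (if k \<in> S then b k j - a k j else 0)) = (\<Sum>k\<in>S. b k j - a k j)"
    using assms by (simp add: sum.If_cases inf.absorb1 inf.absorb2)
  finally show ?thesis .
qed

lemma monoi_ptS:
  fixes x :: "nat \<Rightarrow> 'a::field"
  assumes "S \<subseteq> {..<m}" "x \<in> torus n"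
  shows "monoi n (ptS a b m S) x = monoi n (\<lambda>j. \<Sum>k<m. a k j) x * (\<Prod>k\<in>S. monoi n (\<lambda>j. b k j - a k j) x)"
proof -
  have fin: "finite S" using assms(1) finite_subset by blast
  have nz: "\<And>j. j < n \<Longrightarrow> x j \<noteq> 0" using assms(2) by (auto simp: torus_def)
  have "monoi n (ptS a b m S) x = (\<Prod>j<n. power_int (x j) (\<Sum>k<m. a k j) * (\<Prod>k\<in>S. power_int (x j) (b k j - a k j)))"
    unfolding monoi_def
    by (rule prod.cong) (auto simp: ptS_split[OF assms(1)] power_int_add nz power_int_sum fin)
  also have "\<dots> = monoi n (\<lambda>j. \<Sum>k<m. a k j) x * (\<Prod>j<n. \<Prod>k\<in>S. power_int (x j) (b k j - a k j))"
    by (simp add: monoi_def prod.distrib)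
  also have "(\<Prod>j<n. \<Prod>k\<in>S. power_int (x j) (b k j - a k j)) = (\<Prod>k\<in>S. monoi n (\<lambda>j. b k j - a k j) x)"
    unfolding monoi_def by (rule prod.swap)
  finally show ?thesis .
qed

lemma monoi_nz:
  fixes x :: "nat \<Rightarrow> 'a::field"
  assumes "x \<in> torus n" shows "monoi n p x \<noteq> 0"
  using assms by (auto simp: monoi_def torus_def)

definition lexpos :: "(nat \<Rightarrow> int) \<Rightarrow> bool" where
  "lexpos d \<longleftrightarrow> (\<exists>k. 0 < d k \<and> (\<forall>j<k. d j = 0))"

lemma lexpos_add:
  assumes "lexpos d" "lexpos e" shows "lexpos (\<lambda>j. d j + e j)"
proof -
  obtain k where k: "0 < d k" "\<forall>j<k. d j = 0" using assms(1) lexpos_def by blast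
  obtain l where l: "0 < e l" "\<forall>j<l. e j = 0" using assms(2) lexpos_def by blast
  show ?thesis unfolding lexpos_def
  proof (cases "k \<le> l")
    case True
    then show "\<exists>k. 0 < d k + e k \<and> (\<forall>j<k. d j + e j = 0)"
      using k l by (intro exI[of _ k]) (auto simp: le_less add_pos_nonneg)
  next
    case False
    then show "\<exists>k. 0 < d k + e k \<and> (\<forall>j<k. d j + e j = 0)"
      using k l by (intro exI[of _ l]) auto
  qed
qed

lemma lexpos_sum:
  assumes "finite K" "K \<noteq> {}" "\<And>k. k \<in> K \<Longrightarrow> lexpos (d k)"
  shows "lexpos (\<lambda>j. \<Sum>k\<in>K. d k j)"
  using assms
proof (induction K rule: finite_ne_induct)
  case (singleton x) then show ?case by simp
next
  case (insert x F)
  then show ?case using lexpos_add[of "d x" "\<lambda>j. \<Sum>k\<in>F. d k j"] by simp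
qed

lemma lexpos_nz: "lexpos d \<Longrightarrow> d \<noteq> (\<lambda>_. 0)"
  unfolding lexpos_def by force

lemma lexpos_orient:
  assumes "d \<noteq> (\<lambda>_. 0)" shows "lexpos d \<or> lexpos (\<lambda>j. - d j)"
proof -
  obtain j0 where "d j0 \<noteq> 0" using assms by auto
  define k where "k = (LEAST j. d j \<noteq> 0)"
  have dk: "d k \<noteq> 0" unfolding k_def by (rule LeastI) fact
  have lt: "\<forall>j<k. d j = 0" unfolding k_def using not_less_Least by blast
  show ?thesis
  proof (cases "d k > 0")
    case True then show ?thesis using lt lexpos_def by blast
  next
    case False then have "- d k > 0" using dk by simp
    then show ?thesis using lt unfolding lexpos_def by (intro disjI2 exI[of _ k]) auto
  qed
qed



lemma pigeon:
  assumes "finite A" "finite B" "B \<noteq> {}" "f ` A \<subseteq> B"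
  shows "\<exists>b\<in>B. card A \<le> card B * card {x\<in>A. f x = b}"
proof (rule ccontr)
  assume "\<not> ?thesis"
  then have lt: "\<And>b. b \<in> B \<Longrightarrow> card B * card {x\<in>A. f x = b} < card A" by auto
  have "card A = (\<Sum>b\<in>B. card {x\<in>A. f x = b})"
    using sum.group[OF assms(1) assms(2) assms(4), of "\<lambda>_. 1::nat"] by simp
  then have "card B * card A = (\<Sum>b\<in>B. card B * card {x\<in>A. f x = b})"
    by (simp add: sum_distrib_left)
  also have "\<dots> < (\<Sum>b\<in>B. card A)"
    by (rule sum_strict_mono[OF assms(2) assms(3)]) (use lt in auto)
  finally show False by simp
qed

lemma card_field_ge2: "2 \<le> card (UNIV::'a::{field,finite} set)"
proof -
  have "{0::'a, 1} \<subseteq> UNIV" by simp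
  then have "card {0::'a, 1} \<le> card (UNIV::'a set)" by (rule card_mono[OF finite_UNIV])
  then show ?thesis by simp
qed

lemma card_nonzero: "card (UNIV - {0::'a::{field,finite}}) = card (UNIV::'a set) - 1"
  by (simp add: card_Diff_singleton)

lemma greedy:
  fixes Y :: "nat \<Rightarrow> 'b \<Rightarrow> 'a::{field,finite}"
  assumes fin: "finite X" and nz: "\<And>k x. x \<in> X \<Longrightarrow> Y k x \<noteq> 0"
  shows "\<exists>\<gamma>. real (card {x\<in>X. (\<Prod>k<m. Y k x - \<gamma> k) \<noteq> 0})
            \<le> (1 - 1 / (real (card (UNIV::'a set)) - 1)) ^ m * real (card X)"
proof (induction m)
  case 0 then show ?case by (auto intro!: card_mono fin)
next
  case (Suc m)
  then obtain \<gamma> where g: "real (card {x\<in>X. (\<Prod>k<m. Y k x - \<gamma> k) \<noteq> 0})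
            \<le> (1 - 1 / (real (card (UNIV::'a set)) - 1)) ^ m * real (card X)" by blast
  define A where "A = {x\<in>X. (\<Prod>k<m. Y k x - \<gamma> k) \<noteq> 0}"
  have finA: "finite A" using fin A_def by simp
  have "\<exists>c\<in>UNIV - {0}. card A \<le> card (UNIV - {0::'a}) * card {x\<in>A. Y m x = c}"
    by (rule pigeon[OF finA]) (auto simp: A_def nz dest: subsetD[of _ _ 1])
  then obtain c where c: "card A \<le> (card (UNIV::'a set) - 1) * card {x\<in>A. Y m x = c}"
    by (auto simp: card_nonzero)
  define E where "E = {x\<in>A. Y m x = c}"
  define \<gamma>' where "\<gamma>' = \<gamma>(m := c)"
  have eq: "{x\<in>X. (\<Prod>k<Suc m. Y k x - \<gamma>' k) \<noteq> 0} = A - E"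
  proof -
    have "\<And>x. (\<Prod>k<m. Y k x - \<gamma>' k) = (\<Prod>k<m. Y k x - \<gamma> k)"
      unfolding \<gamma>'_def by (rule prod.cong) auto
    then show ?thesis by (auto simp: A_def E_def \<gamma>'_def)
  qed
  have EA: "E \<subseteq> A" by (auto simp: E_def)
  have cardAE: "real (card (A - E)) = real (card A) - real (card E)"
    using card_Diff_subset[OF finite_subset[OF EA finA] EA] card_mono[OF finA EA] by simp
  have q2: "real (card (UNIV::'a set)) - 1 \<ge> 1" using card_field_ge2[where 'a='a] by simp
  have cE: "real (card A) \<le> (real (card (UNIV::'a set)) - 1) * real (card E)"
    using c card_field_ge2[where 'a='a] unfolding E_def
    by (metis (no_types, lifting) Suc_1 Suc_le_D diff_Suc_1 of_nat_Suc of_nat_le_iff of_nat_mult add.commute add_diff_cancel_right')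
  have "real (card A) - real (card E) \<le> (1 - 1 / (real (card (UNIV::'a set)) - 1)) * real (card A)"
  proof -
    have "real (card A) / (real (card (UNIV::'a set)) - 1) \<le> real (card E)"
      using cE q2 by (simp add: divide_le_eq mult.commute)
    then show ?thesis by (simp add: algebra_simps)
  qed
  also have "\<dots> \<le> (1 - 1 / (real (card (UNIV::'a set)) - 1)) * ((1 - 1 / (real (card (UNIV::'a set)) - 1)) ^ m * real (card X))"
    using g q2 unfolding A_def by (intro mult_left_mono) (auto simp: field_simps)
  finally show ?case using eq cardAE by (intro exI[of _ \<gamma>']) simp
qed



lemma torus_bij:
  "bij_betw (\<lambda>x. restrict x {..<n}) (torus n :: (nat \<Rightarrow> 'a::field) set) (PiE {..<n} (\<lambda>_. UNIV - {0}))"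
proof (rule bij_betw_imageI)
  show "inj_on (\<lambda>x. restrict x {..<n}) (torus n :: (nat \<Rightarrow> 'a) set)"
  proof (rule inj_onI)
    fix x y :: "nat \<Rightarrow> 'a" assume "x \<in> torus n" "y \<in> torus n" "restrict x {..<n} = restrict y {..<n}"
    then show "x = y" unfolding torus_def
    proof (intro ext)
      fix j
      assume h: "x \<in> {x. (\<forall>j<n. x j \<noteq> 0) \<and> (\<forall>j\<ge>n. x j = 1)}" "y \<in> {x. (\<forall>j<n. x j \<noteq> 0) \<and> (\<forall>j\<ge>n. x j = 1)}"
        "restrict x {..<n} = restrict y {..<n}"
      show "x j = y j"
      proof (cases "j < n")
        case True then show ?thesis using fun_cong[OF h(3), of j] by simp
      next
        case False then show ?thesis using h(1,2) by simp
      qed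
    qed
  qed
  show "(\<lambda>x. restrict x {..<n}) ` (torus n :: (nat \<Rightarrow> 'a) set) = PiE {..<n} (\<lambda>_. UNIV - {0})"
  proof
    show "(\<lambda>x. restrict x {..<n}) ` (torus n :: (nat \<Rightarrow> 'a) set) \<subseteq> PiE {..<n} (\<lambda>_. UNIV - {0})"
    proof (rule image_subsetI)
      fix x :: "nat \<Rightarrow> 'a" assume "x \<in> torus n"
      then show "restrict x {..<n} \<in> PiE {..<n} (\<lambda>_. UNIV - {0})"
        unfolding restrict_PiE_iff by (auto simp: torus_def)
    qed
    show "PiE {..<n} (\<lambda>_. UNIV - {0}) \<subseteq> (\<lambda>x. restrict x {..<n}) ` (torus n :: (nat \<Rightarrow> 'a) set)"
    proof
      fix f assume f: "f \<in> PiE {..<n} (\<lambda>_. UNIV - {0::'a})"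
      define x where "x = (\<lambda>j. if j < n then f j else 1)"
      have "x \<in> torus n" using f by (auto simp: x_def torus_def)
      moreover have "restrict x {..<n} = f" using f
        by (auto simp: x_def restrict_def PiE_def extensional_def)
      ultimately show "f \<in> (\<lambda>x. restrict x {..<n}) ` (torus n :: (nat \<Rightarrow> 'a) set)" by force
    qed
  qed
qed

lemma torus_finite: "finite (torus n :: (nat \<Rightarrow> 'a::{field,finite}) set)"
  using bij_betw_finite[OF torus_bij[where 'a='a], of n] finite_PiE[of "{..<n}" "\<lambda>_. UNIV - {0::'a}"] by simp

lemma torus_card: "card (torus n :: (nat \<Rightarrow> 'a::{field,finite}) set) = (card (UNIV::'a set) - 1) ^ n"
  using bij_betw_same_card[OF torus_bij] by (simp add: card_PiE card_nonzero)

lemma toric_N_ge: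
  fixes T :: "'a::{field,finite} itself" and c :: "(nat \<Rightarrow> int) \<Rightarrow> 'a"
  assumes "p \<in> lattice_points n P" "c p \<noteq> 0"
  shows "zero_count n P c \<le> toric_N T n P"
  unfolding toric_N_def
proof (rule cSup_upper)
  show "zero_count n P c \<in> {zero_count n P (c :: (nat \<Rightarrow> int) \<Rightarrow> 'a) | c. \<exists>p\<in>lattice_points n P. c p \<noteq> 0}"
    using assms by blast
  show "bdd_above {zero_count n P (c :: (nat \<Rightarrow> int) \<Rightarrow> 'a) | c. \<exists>p\<in>lattice_points n P. c p \<noteq> 0}"
    by (rule bdd_aboveI[of _ "card (torus n :: (nat \<Rightarrow> 'a) set)"])
       (auto simp: zero_count_def intro!: card_mono torus_finite)
qed



lemma ptS_full_unique:
  assumes "S \<subseteq> {..<m}" "ptS a b m S = ptS a b m {..<m}"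
    and lp: "\<And>k. k < m \<Longrightarrow> lexpos (\<lambda>j. b k j - a k j)"
  shows "S = {..<m}"
proof (rule ccontr)
  assume ne: "S \<noteq> {..<m}"
  have "\<And>j. ptS a b m {..<m} j - ptS a b m S j = (\<Sum>k\<in>{..<m} - S. b k j - a k j)"
    using assms(1) by (simp add: ptS_split sum_diff)
  moreover have "lexpos (\<lambda>j. \<Sum>k\<in>{..<m} - S. b k j - a k j)"
    by (rule lexpos_sum) (use ne assms(1) lp in auto)
  ultimately have "lexpos (\<lambda>j. ptS a b m {..<m} j - ptS a b m S j)" by simp
  then show False using assms(2) lexpos_nz by fastforce
qed

lemma core:
  fixes T :: "'a::{field,finite} itself"
  assumes pts: "\<And>S. S \<subseteq> {..<m} \<Longrightarrow> ptS a b m S \<in> lattice_points n P"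
    and nn: "\<And>S j. S \<subseteq> {..<m} \<Longrightarrow> j < n \<Longrightarrow> 0 \<le> ptS a b m S j"
    and lp: "\<And>k. k < m \<Longrightarrow> lexpos (\<lambda>j. b k j - a k j)"
  shows "(1 - (1 - 1/(real (card (UNIV::'a set)) - 1))^m) * (real (card (UNIV::'a set)) - 1)^n
           \<le> real (toric_N T n P)"
proof -
  define q' where "q' = real (card (UNIV::'a set)) - 1"
  define r where "r = 1 - 1 / q'"
  have q1: "q' \<ge> 1" using card_field_ge2[where 'a='a] by (simp add: q'_def)
  have r0: "0 \<le> r" using q1 by (simp add: r_def)
  have ct: "real (card (torus n :: (nat \<Rightarrow> 'a) set)) = q' ^ n"
    using card_field_ge2[where 'a='a] by (simp add: torus_card q'_def of_nat_diff)
  show ?thesis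
  proof (cases "finite (lattice_points n P)")
    case False
    have "zero_count n P (\<lambda>_. 1::'a) = card (torus n :: (nat \<Rightarrow> 'a) set)"
      using False by (simp add: zero_count_def toric_eval_def)
    moreover have "zero_count n P (\<lambda>_. 1::'a) \<le> toric_N T n P"
      by (rule toric_N_ge[OF pts[of "{}"]]) auto
    ultimately have "q' ^ n \<le> real (toric_N T n P)" using ct by (metis of_nat_le_iff)
    moreover have "(1 - r ^ m) * q' ^ n \<le> q' ^ n"
      using r0 q1 by (simp add: mult_left_le_one_le)
    ultimately show ?thesis unfolding r_def q'_def by linarith
  next
    case True
    define Y where "Y = (\<lambda>k (x :: nat \<Rightarrow> 'a). monoi n (\<lambda>j. b k j - a k j) x)"
    obtain \<gamma> where g: "real (card {x\<in>torus n. (\<Prod>k<m. Y k x - \<gamma> k) \<noteq> 0})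
            \<le> r ^ m * real (card (torus n :: (nat \<Rightarrow> 'a) set))"
      using greedy[OF torus_finite, where Y=Y and m=m] monoi_nz unfolding Y_def r_def q'_def by blast
    define coef where "coef = (\<lambda>S. \<Prod>k\<in>{..<m} - S. - \<gamma> k)"
    define c where "c = (\<lambda>p::nat\<Rightarrow>int. \<Sum>S\<in>{S\<in>Pow {..<m}. ptS a b m S = p}. coef S)"
    define M0 where "M0 = (monoi n (\<lambda>j. \<Sum>k<m. a k j) :: (nat \<Rightarrow> 'a) \<Rightarrow> 'a)"
    have ev: "toric_eval n P c x = M0 x * (\<Prod>k<m. Y k x - \<gamma> k)" if x: "x \<in> torus n" for x
    proof -
      have "toric_eval n P c x = (\<Sum>p\<in>lattice_points n P. \<Sum>S\<in>{S\<in>Pow {..<m}. ptS a b m S = p}.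
                coef S * monoi n (ptS a b m S) x)"
        unfolding toric_eval_def c_def sum_distrib_right
      proof (intro sum.cong refl)
        fix p S assume "S \<in> {S\<in>Pow {..<m}. ptS a b m S = p}"
        then have S: "S \<subseteq> {..<m}" "ptS a b m S = p" by auto
        have "(\<Prod>j<n. x j ^ nat (p j)) = monoi n p x" unfolding monoi_def
        proof (intro prod.cong refl)
          fix j assume "j \<in> {..<n}"
          then have "0 \<le> p j" using nn[OF S(1)] S(2) by auto
          then show "x j ^ nat (p j) = power_int (x j) (p j)"
            by (metis power_int_of_nat nat_0_le)
        qed
        then show "coef S * (\<Prod>j<n. x j ^ nat (p j)) = coef S * monoi n (ptS a b m S) x"
          using S by simp
      qed
      also have "\<dots> = (\<Sum>S\<in>Pow {..<m}. coef S * monoi n (ptS a b m S) x)"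
        by (rule sum.group) (use True pts in auto)
      also have "\<dots> = (\<Sum>S\<in>Pow {..<m}. M0 x * ((\<Prod>k\<in>S. Y k x) * (\<Prod>k\<in>{..<m} - S. - \<gamma> k)))"
        by (intro sum.cong refl) (auto simp: monoi_ptS[OF _ x] M0_def Y_def coef_def)
      also have "\<dots> = M0 x * (\<Prod>k<m. Y k x + - \<gamma> k)"
        unfolding prod_add[OF finite_lessThan] sum_distrib_left by (rule refl)
      finally show ?thesis by simp
    qed
    have cne: "c (ptS a b m {..<m}) \<noteq> 0"
    proof -
      have "{S\<in>Pow {..<m}. ptS a b m S = ptS a b m {..<m}} = {{..<m}}"
      proof -
        have "\<And>S. S \<subseteq> {..<m} \<Longrightarrow> ptS a b m S = ptS a b m {..<m} \<Longrightarrow> S = {..<m}"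
          using ptS_full_unique lp by blast
        then show ?thesis by auto
      qed
      then show ?thesis by (simp add: c_def coef_def)
    qed
    have zs: "{x\<in>torus n. toric_eval n P c x = 0} = torus n - {x\<in>torus n. (\<Prod>k<m. Y k x - \<gamma> k) \<noteq> 0}"
    proof -
      have nz0: "\<And>x. x \<in> torus n \<Longrightarrow> M0 x \<noteq> 0" unfolding M0_def by (rule monoi_nz)
      show ?thesis using ev nz0 by auto
    qed
    have "real (zero_count n P c) = real (card (torus n :: (nat \<Rightarrow> 'a) set))
              - real (card {x\<in>torus n. (\<Prod>k<m. Y k x - \<gamma> k) \<noteq> 0})"
      unfolding zero_count_def zs
      by (subst card_Diff_subset) (auto intro: finite_subset[OF _ torus_finite] simp: of_nat_diff card_mono torus_finite)
    also have "\<dots> \<ge> (1 - r ^ m) * q' ^ n" using g ct by (simp add: algebra_simps)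
    finally have "(1 - r ^ m) * q' ^ n \<le> real (zero_count n P c)" .
    moreover have "zero_count n P c \<le> toric_N T n P"
      by (rule toric_N_ge[where p="ptS a b m {..<m}"]) (use pts[of "{..<m}"] cne in auto)
    ultimately show ?thesis unfolding r_def q'_def by (meson of_nat_le_iff order_trans)
  qed
qed



lemma vertex_in_hull:
  assumes "finite V" "v \<in> V" shows "real_pt v \<in> conv_hull_pts V"
  unfolding conv_hull_pts_def
proof (intro CollectI exI[of _ "\<lambda>w. if w = v then 1 else 0"] conjI)
  show "\<forall>w\<in>V. 0 \<le> (if w = v then 1 else 0 :: real)" by simp
  show "(\<Sum>w\<in>V. if w = v then 1 else 0 :: real) = 1" using assms by simp
  show "real_pt v = (\<lambda>j. \<Sum>w\<in>V. (if w = v then 1 else 0) * real_of_int (w j))"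
  proof
    fix j
    have "(\<Sum>w\<in>V. (if w = v then 1 else 0) * real_of_int (w j)) = (\<Sum>w\<in>V. if w = v then real_of_int (w j) else 0)"
      by (rule sum.cong) auto
    also have "\<dots> = real_of_int (v j)" using assms by simp
    finally show "real_pt v j = (\<Sum>w\<in>V. (if w = v then 1 else 0) * real_of_int (w j))"
      by (simp add: real_pt_def)
  qed
qed

lemma hull_single: "conv_hull_pts {v} \<subseteq> {real_pt v}"
proof
  fix x assume "x \<in> conv_hull_pts {v}"
  then obtain u where "sum u {v} = (1::real)" "x = (\<lambda>j. \<Sum>w\<in>{v}. u w * real_of_int (w j))"
    unfolding conv_hull_pts_def by blast
  then show "x \<in> {real_pt v}" by (simp add: real_pt_def)
qed

lemma segment_in:
  assumes "lattice_polytope n Q" "pos_dim Q"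
  shows "\<exists>u w. supp_in n u \<and> supp_in n w \<and> real_pt u \<in> Q \<and> real_pt w \<in> Q \<and> lexpos (\<lambda>j. w j - u j)"
proof -
  obtain V where V: "finite V" "V \<noteq> {}" "\<forall>v\<in>V. supp_in n v" "Q = conv_hull_pts V"
    using assms(1) unfolding lattice_polytope_def by blast
  obtain v0 where v0: "v0 \<in> V" using V(2) by blast
  have "\<exists>v\<in>V. v \<noteq> v0"
  proof (rule ccontr)
    assume "\<not> ?thesis"
    then have "V = {v0}" using v0 by blast
    then have "Q \<subseteq> {real_pt v0}" using V(4) hull_single by simp
    then show False using assms(2) unfolding pos_dim_def by (metis singletonD subsetD)
  qed
  then obtain v1 where v1: "v1 \<in> V" "v1 \<noteq> v0" by blast
  have ne: "(\<lambda>j. v1 j - v0 j) \<noteq> (\<lambda>_. 0)"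
  proof
    assume "(\<lambda>j. v1 j - v0 j) = (\<lambda>_. 0)"
    then have "\<And>j. v1 j - v0 j = 0" by (rule fun_cong)
    then have "v1 = v0" by (intro ext) simp
    then show False using v1(2) by blast
  qed
  have in0: "real_pt v0 \<in> Q" "real_pt v1 \<in> Q" using V(1,4) vertex_in_hull v0 v1 by auto
  have s0: "supp_in n v0" "supp_in n v1" using V(3) v0 v1 by auto
  from lexpos_orient[OF ne] show ?thesis
  proof
    assume "lexpos (\<lambda>j. v1 j - v0 j)"
    then show ?thesis using in0 s0 by (intro exI[of _ v0] exI[of _ v1]) simp
  next
    assume "lexpos (\<lambda>j. - (v1 j - v0 j))"
    then show ?thesis using in0 s0 by (intro exI[of _ v1] exI[of _ v0]) simp
  qed
qed

lemma msum_pt: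
  "(\<And>k. k < length Ps \<Longrightarrow> real_pt (f k) \<in> Ps ! k) \<Longrightarrow>
    real_pt (\<lambda>j. \<Sum>k<length Ps. f k j) \<in> msum Ps"
proof (induction Ps arbitrary: f)
  case Nil then show ?case by (simp add: real_pt_def)
next
  case (Cons Q Ps)
  have h0: "real_pt (f 0) \<in> Q" using Cons.prems[of 0] by simp
  have h1: "real_pt (\<lambda>j. \<Sum>k<length Ps. f (Suc k) j) \<in> msum Ps"
    using Cons.IH[of "\<lambda>k. f (Suc k)"] Cons.prems by fastforce
  have "real_pt (\<lambda>j. \<Sum>k<length (Q # Ps). f k j) =
        (\<lambda>j. real_pt (f 0) j + real_pt (\<lambda>j. \<Sum>k<length Ps. f (Suc k) j) j)"
    by (simp only: real_pt_def length_Cons sum.lessThan_Suc_shift of_int_add)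
  then show ?case using h0 h1 by (simp only: msum.simps) blast
qed

lemma supp_ptS:
  assumes "\<And>k. k < m \<Longrightarrow> supp_in n (a k)" "\<And>k. k < m \<Longrightarrow> supp_in n (b k)"
  shows "supp_in n (ptS a b m S)"
  using assms unfolding supp_in_def ptS_def by (auto intro!: sum.neutral)

lemma nat_Sup_ge:
  assumes "(l::nat) > 0" "Sup X \<ge> l" shows "\<exists>x\<in>X. x \<ge> l"
proof (rule ccontr)
  assume "\<not> ?thesis"
  then have lt: "\<And>x. x \<in> X \<Longrightarrow> x \<le> l - 1" by force
  show False
  proof (cases "X = {}")
    case True then show False using assms by simp
  next
    case False
    then have "Sup X \<le> l - 1" using lt by (intro cSup_least) auto
    then show False using assms by simp
  qed
qed

lemma delta_bound:
  fixes T :: "'a::{field,finite} itself"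
  assumes box: "in_box (card (UNIV :: 'a set)) n P"
    and l: "l > 0" "full_minkowski_length n P \<ge> l"
  shows "toric_delta T n P \<le> (1 - 1/(real (card (UNIV::'a set)) - 1)) ^ l"
proof -
  define q' where "q' = real (card (UNIV::'a set)) - 1"
  define r where "r = 1 - 1 / q'"
  have q1: "q' \<ge> 1" using card_field_ge2[where 'a='a] by (simp add: q'_def)
  have r0: "0 \<le> r" "r \<le> 1" using q1 by (auto simp: r_def)
  obtain x where "x \<in> {minkowski_length n Q | Q. lattice_polytope n Q \<and> Q \<subseteq> P}" "x \<ge> l"
    using nat_Sup_ge[OF l(1)] l(2) unfolding full_minkowski_length_def by blast
  then obtain Q where Q: "lattice_polytope n Q" "Q \<subseteq> P" "minkowski_length n Q \<ge> l" by blast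
  obtain m where "m \<in> {l. \<exists>Ps. length Ps = l \<and> (\<forall>Q\<in>set Ps. lattice_polytope n Q \<and> pos_dim Q) \<and> Q = msum Ps}" "m \<ge> l"
    using nat_Sup_ge[OF l(1)] Q(3) unfolding minkowski_length_def by blast
  then obtain Ps where Ps: "length Ps = m" "\<forall>Q\<in>set Ps. lattice_polytope n Q \<and> pos_dim Q" "Q = msum Ps" "m \<ge> l"
    by blast
  have ex: "\<forall>k. \<exists>uw. k < m \<longrightarrow> (supp_in n (fst uw) \<and> supp_in n (snd uw) \<and> real_pt (fst uw) \<in> Ps ! k \<and>
           real_pt (snd uw) \<in> Ps ! k \<and> lexpos (\<lambda>j. snd uw j - fst uw j))"
  proof
    fix k
    show "\<exists>uw. k < m \<longrightarrow> (supp_in n (fst uw) \<and> supp_in n (snd uw) \<and> real_pt (fst uw) \<in> Ps ! k \<and>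
           real_pt (snd uw) \<in> Ps ! k \<and> lexpos (\<lambda>j. snd uw j - fst uw j))"
    proof (cases "k < m")
      case True
      then have "Ps ! k \<in> set Ps" using Ps(1) by simp
      then obtain u w where "supp_in n u \<and> supp_in n w \<and> real_pt u \<in> Ps ! k \<and> real_pt w \<in> Ps ! k \<and> lexpos (\<lambda>j. w j - u j)"
        using segment_in Ps(2) by blast
      then show ?thesis by (intro exI[of _ "(u, w)"]) simp
    qed simp
  qed
  obtain uw where uw: "\<And>k. k < m \<Longrightarrow> supp_in n (fst (uw k)) \<and> supp_in n (snd (uw k)) \<and> real_pt (fst (uw k)) \<in> Ps ! k \<and>
           real_pt (snd (uw k)) \<in> Ps ! k \<and> lexpos (\<lambda>j. snd (uw k) j - fst (uw k) j)"
    using choice[OF ex] by blast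
  define a where "a = (\<lambda>k. fst (uw k))"
  define b where "b = (\<lambda>k. snd (uw k))"
  have inP: "real_pt (ptS a b m S) \<in> P" for S
  proof -
    have "real_pt (\<lambda>j. \<Sum>k<length Ps. (if k \<in> S then b k else a k) j) \<in> msum Ps"
      by (rule msum_pt) (use uw Ps(1) in \<open>auto simp: a_def b_def\<close>)
    moreover have "(\<lambda>j. \<Sum>k<length Ps. (if k \<in> S then b k else a k) j) = ptS a b m S"
      unfolding ptS_def Ps(1) by (intro ext sum.cong) auto
    ultimately show ?thesis using Ps(3) Q(2) by auto
  qed
  have pts: "ptS a b m S \<in> lattice_points n P" for S
    using inP supp_ptS[of m n a b S] uw unfolding lattice_points_def a_def b_def by auto
  have nn: "0 \<le> ptS a b m S j" if "j < n" for S j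
  proof -
    have "0 \<le> real_pt (ptS a b m S) j" using box inP that unfolding in_box_def by blast
    then show ?thesis by (simp add: real_pt_def)
  qed
  have lp: "lexpos (\<lambda>j. b k j - a k j)" if "k < m" for k using uw[OF that] by (simp add: a_def b_def)
  have N: "(1 - r ^ m) * q' ^ n \<le> real (toric_N T n P)"
    using core[where T=T, OF pts nn lp] unfolding r_def q'_def by blast
  have qn: "q' ^ n > 0" using q1 by simp
  have "toric_delta T n P = (q' ^ n - real (toric_N T n P)) / q' ^ n"
    by (simp add: toric_delta_def q'_def)
  also have "\<dots> \<le> (q' ^ n - (1 - r ^ m) * q' ^ n) / q' ^ n"
    using N qn by (intro divide_right_mono) auto
  also have "\<dots> = r ^ m"
  proof -
    have "q' ^ n - (1 - r ^ m) * q' ^ n = r ^ m * q' ^ n" by (simp add: algebra_simps)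
    then show ?thesis using qn by (metis less_irrefl nonzero_mult_div_cancel_right)
  qed
  also have "\<dots> \<le> r ^ l" using r0 Ps(4) by (simp add: power_decreasing)
  finally show ?thesis unfolding r_def q'_def .
qed



theorem mainTheorem14:
  fixes T :: "'a::{field,finite} itself"
    and n :: "nat \<Rightarrow> nat" and P :: "nat \<Rightarrow> (nat \<Rightarrow> real) set"
    and \<delta> R :: real
  assumes poly: "\<And>i. lattice_polytope (n i) (P i)"
    and box: "\<And>i. in_box (card (UNIV :: 'a set)) (n i) (P i)"
    and dim: "filterlim n at_top sequentially"
    and \<delta>_lim: "(\<lambda>i. toric_delta T (n i) (P i)) \<longlonglongrightarrow> \<delta>"
    and R_lim: "(\<lambda>i. toric_rate T (n i) (P i)) \<longlonglongrightarrow> R"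
    and \<delta>_range: "\<delta> \<in> {0..1}" and R_range: "R \<in> {0..1}"
    and unbdd: "\<not> bdd_above (range (\<lambda>i. full_minkowski_length (n i) (P i)))"
  shows "(\<lambda>i. toric_delta T (n i) (P i)) \<longlonglongrightarrow> 0"
proof -
  define r where "r = 1 - 1/(real (card (UNIV::'a set)) - 1)"
  have q1: "real (card (UNIV::'a set)) - 1 \<ge> 1" using card_field_ge2[where 'a='a] by simp
  have r0: "0 \<le> r" "r < 1" using q1 by (auto simp: r_def)
  have bnd: "\<delta> \<le> r ^ l" if l: "l > 0" for l
  proof (rule ccontr)
    assume "\<not> \<delta> \<le> r ^ l"
    then have "r ^ l < \<delta>" by simp
    from order_tendstoD(1)[OF \<delta>_lim this] obtain N where
      N: "\<And>i. i \<ge> N \<Longrightarrow> r ^ l < toric_delta T (n i) (P i)"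
      unfolding eventually_sequentially by blast
    define B where "B = max l (Max ((\<lambda>i. full_minkowski_length (n i) (P i)) ` {..<N}))"
    have "\<not> (\<forall>x\<in>range (\<lambda>i. full_minkowski_length (n i) (P i)). x \<le> B)"
      using unbdd unfolding bdd_above_def by blast
    then obtain i where i: "full_minkowski_length (n i) (P i) > B" by (auto simp: not_le)
    have "i \<ge> N"
    proof (rule ccontr)
      assume "\<not> N \<le> i"
      then have "full_minkowski_length (n i) (P i) \<le> Max ((\<lambda>i. full_minkowski_length (n i) (P i)) ` {..<N})"
        by (intro Max_ge) auto
      then show False using i unfolding B_def by simp
    qed
    moreover have "toric_delta T (n i) (P i) \<le> r ^ l"
      unfolding r_def by (rule delta_bound[OF box l]) (use i B_def in simp)
    ultimately show False using N[of i] by linarith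
  qed
  have "(\<lambda>l. r ^ l) \<longlonglongrightarrow> 0"
    using LIMSEQ_power_zero[of r] r0 by simp
  then have "(\<lambda>l. r ^ Suc l) \<longlonglongrightarrow> 0" by (rule LIMSEQ_Suc)
  moreover have "\<forall>\<^sub>F l in sequentially. \<delta> \<le> r ^ Suc l"
    using bnd[of "Suc _"] by (intro always_eventually allI) blast
  ultimately have "\<delta> \<le> 0" by (rule tendsto_lowerbound) simp
  then have "\<delta> = 0" using \<delta>_range by simp
  then show ?thesis using \<delta>_lim by simp
qed

end
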